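(* Let $\mathcal{C}$ be a finite set of medical codes, let $n_v\ge 1$, and let $R$ be a positive integer. Consider a windowed linear model specified by finitely many window lengths $t_1,\dots,t_m\in\{0,1,\dots,R-1\}\cup\{\infty\}$ and real weights $w_{\ell,c}$ ($1\le \ell\le m$, $c\in\mathcal{C}$), with output $$g(x)=\sigma\Big(\sum_{\ell=1}^m\sum_{c\in\mathcal{C}} w_{\ell,c}\,\xi_{\ell,c}(x)\Big),$$ where $\xi_{\ell,c}(x)=1$ if some visit $j$ of the history $x$ satisfies $c\in C_j$ and $T_A-t_j\le t_\ell$ (the condition on time being vacuous if $t_\ell=\infty$), and $\xi_{\ell,c}(x)=0$ otherwise. Then for every $\varepsilon>0$ there exist an embedding dimension $d_e$, a number of kernels $K$, a frequency vector $\omega\in\mathbb{R}^{d_e/2}$, and parameters of a SARD model (as defined in the context, with any number $L\ge 1$ of self-attention layers) whose output $f$ satisfies $|f(x)-g(x)|<\varepsilon$ for every patient history $x$ with at most $n_v$ visits.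
   Context: A patient history $x$ consists of $n\le n_v$ visits; visit $j$ has an integer time $t_j$ (in days) with $t_j\le T_A$, where $T_A$ is the fixed prediction date, and a set of codes $C_j\subseteq\mathcal{C}$. $\sigma$ denotes the logistic sigmoid $\sigma(z)=1/(1+e^{-z})$. SARD model: it has parameters consisting of a code embedding $\phi:\mathcal{C}\to\mathbb{R}^{d_e}$ ($d_e$ even), self-attention parameters, kernels $\kappa_1,\dots,\kappa_K\in\mathbb{R}^{d_e}$ and weights $u_1,\dots,u_K\in\mathbb{R}$; the frequency vector $\omega\in\mathbb{R}^{d_e/2}$ is fixed. For each visit $j$, the content embedding is $\psi_j=\sum_{c\in C_j}\phi(c)$ and the temporal embedding is $\tau_j=\sin(\tilde t_j\omega)\,\|\,\cos(\tilde t_j\omega)\in\mathbb{R}^{d_e}$, where $\tilde t_j=\min(R,\,T_A-t_j)$, $\|$ denotes concatenation, and $\sin,\cos$ act elementwise. The initial representation is $h^0_j=\psi_j+\tau_j$. Each of $L$ self-attention layers maps $(h^{l-1}_j)_j$ to $(h^{l}_j)_j$ as follows: each of $H$ heads applies affine maps to obtain $k_j,q_j,v_j$, forms weights $a_{jr}=\exp(q_j\cdot k_r/\sqrt{d_e})/\sum_{s=1}^{n}\exp(q_j\cdot k_s/\sqrt{d_e})$ over the $n$ actual (non-padding) visits, and outputs $\sum_{r}a_{jr}v_r$; the heads' outputs are concatenated and passed through an affine map to $\mathbb{R}^{d_e}$, which is added to $h^{l-1}_j$ (residual connection). Write $\tilde\psi_j=h^L_j$. The convolutional prediction head computes $\chi_k=\max_{1\le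 j\le n}\langle\kappa_k,\tilde\psi_j\rangle$ for $k=1,\dots,K$ and outputs $f(x)=\sigma\big(\sum_{k=1}^K u_k\,\sigma(\chi_k)\big)$. All affine maps, $\phi$, $\kappa_k$, $u_k$ are free parameters. *)

theory Defs
  imports Complex_Main
begin

text \<open>Vectors in R^d are represented as functions nat => real; only the
  entries with index < d are meaningful (all sums below are bounded by d).\<close>
type_synonym vec = "nat \<Rightarrow> real"

text \<open>An affine map R^din -> R^dout: a matrix M (row i, column j) and a bias b.\<close>
type_synonym aff = "(nat \<Rightarrow> nat \<Rightarrow> real) \<times> vec"

definition sigmoid :: "real \<Rightarrow> real" where
  "sigmoid z = 1 / (1 + exp (- z))"

definition aff_app :: "nat \<Rightarrow> aff \<Rightarrow> vec \<Rightarrow> vec" where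
  "aff_app din A x = (\<lambda>i. snd A i + (\<Sum>j<din. fst A i j * x j))"

definition dotp :: "nat \<Rightarrow> vec \<Rightarrow> vec \<Rightarrow> real" where
  "dotp d x y = (\<Sum>i<d. x i * y i)"

text \<open>A patient history: list of visits (t_j, C_j), times in days (integers).\<close>
type_synonym 'c history = "(int \<times> 'c set) list"

definition temb :: "nat \<Rightarrow> vec \<Rightarrow> real \<Rightarrow> vec" where
  "temb de \<omega> t = (\<lambda>i. if i < de div 2 then sin (t * \<omega> i) else cos (t * \<omega> (i - de div 2)))"

definition attn_head :: "nat \<Rightarrow> nat \<Rightarrow> aff \<times> aff \<times> aff \<Rightarrow> vec list \<Rightarrow> vec list" where
  "attn_head de dk hp hs =
     (let Q = fst hp; K = fst (snd hp); V = snd (snd hp);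
          qs = map (aff_app de Q) hs; ks = map (aff_app de K) hs; vs = map (aff_app de V) hs
      in map (\<lambda>q. (let ws = map (\<lambda>k. exp (dotp dk q k / sqrt (real de))) ks
                   in (\<lambda>i. (\<Sum>r<length hs. (ws ! r / sum_list ws) * (vs ! r) i)))) qs)"

text \<open>One self-attention layer: list of heads and output affine map
  R^(H*dv) -> R^de applied to the concatenation of the head outputs, plus residual.\<close>
type_synonym layer = "(aff \<times> aff \<times> aff) list \<times> aff"

definition layer_app :: "nat \<Rightarrow> nat \<Rightarrow> nat \<Rightarrow> layer \<Rightarrow> vec list \<Rightarrow> vec list" where
  "layer_app de dk dv lay hs =
     (let heads = fst lay; Wo = snd lay;
          outs = map (\<lambda>hp. attn_head de dk hp hs) heads
      in map (\<lambda>j. (let c = (\<lambda>i. ((outs ! (i div dv)) ! j) (i mod dv))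
                  in (\<lambda>i. (hs ! j) i + aff_app (length heads * dv) Wo c i)))
             [0..<length hs])"

definition sard :: "nat \<Rightarrow> int \<Rightarrow> nat \<Rightarrow> nat \<Rightarrow> nat \<Rightarrow> vec \<Rightarrow> ('c \<Rightarrow> vec) \<Rightarrow> layer list
                    \<Rightarrow> nat \<Rightarrow> (nat \<Rightarrow> vec) \<Rightarrow> (nat \<Rightarrow> real) \<Rightarrow> 'c history \<Rightarrow> real" where
  "sard R TA de dk dv \<omega> \<phi> layers K \<kappa> u x =
     (let h0 = map (\<lambda>(t, C). (\<lambda>i. (\<Sum>c\<in>C. \<phi> c i)
                                  + temb de \<omega> (real_of_int (min (int R) (TA - t))) i)) x;
          hL = foldl (\<lambda>h lay. layer_app de dk dv lay h) h0 layers;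
          \<chi> = (\<lambda>k. Max ((\<lambda>h. dotp de (\<kappa> k) h) ` set hL))
      in sigmoid (\<Sum>k<K. u k * sigmoid (\<chi> k)))"

text \<open>Windowed linear model. A window length is "nat option", None meaning infinity.\<close>
definition xi :: "int \<Rightarrow> nat option \<Rightarrow> 'c \<Rightarrow> 'c history \<Rightarrow> real" where
  "xi TA w c x = (if (\<exists>(t, C)\<in>set x. c \<in> C \<and> (case w of None \<Rightarrow> True | Some wl \<Rightarrow> TA - t \<le> int wl))
                  then 1 else 0)"

definition windowed :: "'c set \<Rightarrow> int \<Rightarrow> nat option list \<Rightarrow> (nat \<Rightarrow> 'c \<Rightarrow> real) \<Rightarrow> 'c history \<Rightarrow> real" where
  "windowed Cs TA ws W x = sigmoid (\<Sum>l<length ws. \<Sum>c\<in>Cs. W l c * xi TA (ws ! l) c x)"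

end

theory Submission
  imports Defs
begin


lemma sigmoid_mono: "x \<le> y \<Longrightarrow> sigmoid x \<le> sigmoid y"
  unfolding sigmoid_def by (simp add: frac_le add_pos_pos)

lemma sigmoid_pos: "0 < sigmoid x"
  unfolding sigmoid_def by (simp add: add_pos_pos)

lemma sigmoid_lt1: "sigmoid x < 1"
  unfolding sigmoid_def by (simp add: add_pos_pos)

lemma sigmoid_one_minus: "1 - sigmoid x = sigmoid (- x)"
proof -
  have e: "exp (-x) = inverse (exp x)" by (simp add: exp_minus)
  have p: "exp x > 0" by simp
  have q: "1 + exp x \<noteq> 0" using p by linarith
  have "1 / (1 + exp x) + exp x / (1 + exp x) = 1" using q by (simp add: add_divide_distrib[symmetric])
  then show ?thesis unfolding sigmoid_def e using p q by (simp add: field_simps)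
qed

lemma sigmoid_neg_bound: "N \<ge> 0 \<Longrightarrow> sigmoid (- N) \<le> 1 / (1 + N)"
proof -
  assume "N \<ge> 0"
  moreover have "1 + N \<le> exp N" by (rule exp_ge_add_one_self)
  ultimately have "1 + N \<le> 1 + exp N" "0 < 1 + N" by linarith+
  then show ?thesis unfolding sigmoid_def by (intro frac_le) auto
qed

lemma sigmoid_deriv: "DERIV sigmoid x :> exp (-x) / (1 + exp (-x))^2"
proof -
  have "1 + exp (-x) \<noteq> 0" by (smt (verit) exp_gt_zero)
  then show ?thesis unfolding sigmoid_def
    by (auto intro!: derivative_eq_intros simp: power2_eq_square)
qed

lemma sigmoid_lip: "\<bar>sigmoid x - sigmoid y\<bar> \<le> \<bar>x - y\<bar>"
proof -
  have D: "\<bar>exp (-z) / (1 + exp (-z))^2\<bar> \<le> 1" for z :: real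
  proof -
    have "exp (-z) \<le> (1 + exp (-z))^2" by (simp add: power2_eq_square algebra_simps)
    then show ?thesis by (simp add: divide_le_eq_1)
  qed
  have "\<bar>sigmoid b - sigmoid a\<bar> \<le> \<bar>b - a\<bar>" if ab: "a < b" for a b
  proof -
    obtain z where "sigmoid b - sigmoid a = (b - a) * (exp (-z) / (1 + exp (-z))^2)"
      using MVT2[OF ab, of sigmoid "\<lambda>z. exp (-z) / (1 + exp (-z))^2"] sigmoid_deriv by blast
    then have "\<bar>sigmoid b - sigmoid a\<bar> = \<bar>b - a\<bar> * \<bar>exp (-z) / (1 + exp (-z))^2\<bar>"
      by (simp add: abs_mult)
    also have "\<dots> \<le> \<bar>b - a\<bar>" using D[of z] by (intro mult_left_le) auto
    finally show ?thesis .
  qed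
  note M = this
  show ?thesis
  proof (cases x y rule: linorder_cases)
    case greater then show ?thesis using M[of y x] by simp
  next
    case less then show ?thesis using M[of x y] by (simp add: abs_minus_commute)
  qed simp
qed

lemma sum_regroup: fixes f :: "nat \<Rightarrow> real" shows "(\<Sum>k<n*m. f k) = (\<Sum>l<n. \<Sum>i<m. f (l*m+i))"
proof (induction n)
  case 0 then show ?case by simp
next
  case (Suc n)
  have "{..<Suc n * m} = {..<n*m} \<union> {n*m..<n*m+m}" by auto
  then have "(\<Sum>k<Suc n*m. f k) = (\<Sum>k<n*m. f k) + (\<Sum>k\<in>{n*m..<n*m+m}. f k)"
    by (simp add: sum.union_disjoint ivl_disj_int)
  also have "(\<Sum>k\<in>{n*m..<n*m+m}. f k) = (\<Sum>i<m. f (n*m+i))"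
    using sum.shift_bounds_nat_ivl[of f 0 "n*m" m] by (simp add: lessThan_atLeast0 add.commute)
  finally show ?case using Suc by simp
qed

lemma layer_id:
  "layer_app de dk dv (hps, (\<lambda>_ _. 0, \<lambda>_. 0)) hs = hs"
  unfolding layer_app_def aff_app_def Let_def
  by (simp add: map_nth)

lemma foldl_id:
  "foldl (\<lambda>h lay. layer_app de dk dv lay h) hs (replicate L (hps, (\<lambda>_ _. 0, \<lambda>_. 0))) = hs"
  by (induction L) (simp_all add: layer_id)



theorem lemma1:
  fixes Cs :: "'c set" and nv R :: nat and TA :: int
    and ws :: "nat option list" and W :: "nat \<Rightarrow> 'c \<Rightarrow> real"
    and \<epsilon> :: real and L H :: nat
  assumes "finite Cs" and "nv \<ge> 1" and "R > 0"
    and "\<forall>w\<in>set ws. (case w of None \<Rightarrow> True | Some wl \<Rightarrow> wl < R)"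
    and "\<epsilon> > 0" and "L \<ge> 1" and "H \<ge> 1"
  shows "\<exists>de dk dv K \<omega> (\<phi> :: 'c \<Rightarrow> vec) layers \<kappa> u.
           even de \<and> length layers = L \<and> (\<forall>lay\<in>set layers. length (fst lay) = H) \<and>
           (\<forall>x :: 'c history. 1 \<le> length x \<and> length x \<le> nv \<and>
               (\<forall>(t, C)\<in>set x. t \<le> TA \<and> C \<subseteq> Cs) \<longrightarrow>
               \<bar>sard R TA de dk dv \<omega> \<phi> layers K \<kappa> u x - windowed Cs TA ws W x\<bar> < \<epsilon>)"
proof -
  define m where "m = card Cs"
  obtain enum where bij: "bij_betw enum {0..<m} Cs"
    using ex_bij_betw_nat_finite[OF assms(1)] m_def by blast
  define idx where "idx = inv_into {0..<m} enum"
  have idx_lt: "idx c < m" if "c \<in> Cs" for c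
    using bij that unfolding idx_def
    by (metis atLeastLessThan_iff bij_betw_def inv_into_into)
  have enum_idx: "enum (idx c) = c" if "c \<in> Cs" for c
    using bij that unfolding idx_def by (simp add: bij_betw_inv_into_right)
  have idx_enum: "idx (enum i) = i" if "i < m" for i
    using bij that unfolding idx_def by (simp add: bij_betw_inv_into_left)
  have enum_in: "enum i \<in> Cs" if "i < m" for i
    using bij that by (auto dest: bij_betwE)
  define D where "D = m + 2"
  define de where "de = 2 * D"
  define Wsum where "Wsum = (\<Sum>l<length ws. \<Sum>c\<in>Cs. \<bar>W l c\<bar>)"
  have Wsum_nn: "Wsum \<ge> 0" unfolding Wsum_def by (intro sum_nonneg) auto
  define N where "N = Wsum / \<epsilon> + 1"
  have Npos: "N > 0" unfolding N_def using divide_nonneg_pos[OF Wsum_nn assms(5)] by linarith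
  define pp where "pp l = (case ws!l of None \<Rightarrow> 1 | Some wl \<Rightarrow> cos (real wl / real R))" for l
  define qq where "qq l = (case ws!l of None \<Rightarrow> 0 | Some wl \<Rightarrow> cos (real (wl+1) / real R))" for l
  define lam where "lam l = (case ws!l of None \<Rightarrow> 0 | Some wl \<Rightarrow> 2*N / (pp l - qq l))" for l
  define \<omega> :: vec where "\<omega> = (\<lambda>i. if i = 1 then 1 / real R else 0)"
  define \<phi> :: "'c \<Rightarrow> vec" where "\<phi> c = (\<lambda>i. if c \<in> Cs \<and> i = idx c + 2 then 1 else 0)" for c
  define kern :: "nat \<Rightarrow> 'c \<Rightarrow> vec" where "kern l c = (\<lambda>i. (if i = idx c + 2 then 2*N + lam l * (1 - pp l) else 0)
      + (if i = D then - lam l - N else 0) + (if i = D + 1 then lam l else 0))" for l c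
  define \<kappa> :: "nat \<Rightarrow> vec" where "\<kappa> k = kern (k div m) (enum (k mod m))" for k
  define u :: "nat \<Rightarrow> real" where "u k = W (k div m) (enum (k mod m))" for k
  define K where "K = length ws * m"
  define hp0 :: "aff \<times> aff \<times> aff" where "hp0 = ((\<lambda>_ _. 0, \<lambda>_. 0), (\<lambda>_ _. 0, \<lambda>_. 0), (\<lambda>_ _. 0, \<lambda>_. 0))"
  define layers :: "layer list" where "layers = replicate L (replicate H hp0, (\<lambda>_ _. 0, \<lambda>_. 0))"
  define win where "win l t = (case ws!l of None \<Rightarrow> True | Some wl \<Rightarrow> TA - t \<le> int wl)" for l t
  define emb :: "int \<times> 'c set \<Rightarrow> vec" where "emb = (\<lambda>(t, C). (\<lambda>i. (\<Sum>c\<in>C. \<phi> c i)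
        + temb de \<omega> (real_of_int (min (int R) (TA - t))) i))"

  have key: "(c \<in> C \<and> win l t \<longrightarrow> dotp de (kern l c) (emb (t,C)) \<ge> N) \<and>
             (\<not> (c \<in> C \<and> win l t) \<longrightarrow> dotp de (kern l c) (emb (t,C)) \<le> - N)"
    if tC: "t \<le> TA" "C \<subseteq> Cs" and l: "l < length ws" and c: "c \<in> Cs" for t C l c
  proof -
    define tt where "tt = real_of_int (min (int R) (TA - t))"
    have fC: "finite C" using tC(2) assms(1) finite_subset by blast
    have lt: "idx c + 2 < de" "D < de" "D + 1 < de" using idx_lt[OF c] unfolding de_def D_def by auto
    have dot: "dotp de (kern l c) h = (2*N + lam l * (1 - pp l)) * h (idx c + 2)
                  + (- lam l - N) * h D + lam l * h (D+1)" for h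
      unfolding dotp_def kern_def using lt
      by (simp add: distrib_right sum.distrib if_distrib[of "\<lambda>z. z * h _"] cong: if_cong)
    have e1: "emb (t,C) (idx c + 2) = (if c \<in> C then 1 else 0)"
    proof -
      have "(\<Sum>c'\<in>C. \<phi> c' (idx c + 2)) = (\<Sum>c'\<in>C. if c' = c then 1 else 0)"
      proof (rule sum.cong)
        fix c' assume "c' \<in> C"
        then have "c' \<in> Cs" using tC by auto
        then have "(idx c' + 2 = idx c + 2) = (c' = c)" using enum_idx c by (metis add_right_cancel)
        then show "\<phi> c' (idx c + 2) = (if c' = c then 1 else 0)"
          unfolding \<phi>_def using \<open>c' \<in> Cs\<close> by auto
      qed simp
      also have "\<dots> = (if c \<in> C then 1 else 0)" using fC by simp
      finally show ?thesis
        using idx_lt[OF c] unfolding emb_def temb_def \<omega>_def de_def D_def by simp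
    qed
    have z: "(\<Sum>c'\<in>C. \<phi> c' i) = 0" if "i \<ge> D" for i
    proof (rule sum.neutral, intro ballI)
      fix c' assume "c' \<in> C"
      then have "c' \<in> Cs" using tC by auto
      then show "\<phi> c' i = 0" using idx_lt[of c'] that unfolding \<phi>_def D_def by auto
    qed
    have e2: "emb (t,C) D = 1" using z[of D] unfolding emb_def temb_def \<omega>_def de_def by simp
    have e3: "emb (t,C) (D+1) = cos (tt / real R)" using z[of "D+1"]
      unfolding emb_def temb_def \<omega>_def de_def tt_def by simp
    have V: "dotp de (kern l c) (emb (t,C)) = (2*N + lam l * (1 - pp l)) * (if c \<in> C then 1 else 0)
               + (- lam l - N) + lam l * cos (tt / real R)"
      unfolding dot e1 e2 e3 by simp
    show ?thesis
    proof (cases "ws ! l")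
      case None
      then have "lam l = 0" "pp l = 1" "win l t" unfolding lam_def pp_def win_def by auto
      then show ?thesis unfolding V using Npos by auto
    next
      case (Some wl)
      have wlR: "wl < R" using assms(4) l Some by (metis nth_mem option.simps(5))
      have Rpos: "real R > 0" using assms(3) by simp
      have tt0: "0 \<le> tt" "tt \<le> real R" unfolding tt_def using tC(1) by auto
      have s01: "0 \<le> tt / real R" "tt / real R \<le> 1" using tt0 Rpos by auto
      have pi1: "1 \<le> pi" using pi_ge_two by linarith
      have w1: "real (wl+1) / real R \<le> 1" using wlR Rpos by simp
      have w0: "real wl / real R < real (wl+1) / real R" using Rpos by (simp add: divide_strict_right_mono)
      have pq: "pp l > qq l" unfolding pp_def qq_def Some
        using cos_monotone_0_pi[OF _ w0] w1 pi1 by simp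
      have lam_nn: "lam l \<ge> 0" unfolding lam_def Some using pq Npos by simp
      have lampq: "lam l * (qq l - pp l) = - 2 * N" unfolding lam_def Some using pq
        by (simp add: field_simps)
      have cos1: "cos (tt / real R) \<le> 1" by simp
      have winiff: "win l t = (tt \<le> real wl)" unfolding win_def Some tt_def using wlR by auto
      show ?thesis
      proof (intro conjI impI)
        assume A: "c \<in> C \<and> win l t"
        then have "tt / real R \<le> real wl / real R" using winiff Rpos by (simp add: divide_right_mono)
        then have "cos (tt / real R) \<ge> pp l" unfolding pp_def Some
          using cos_monotone_0_pi_le[OF s01(1)] w1 w0 pi1 by simp
        then have "lam l * (cos (tt / real R) - pp l) \<ge> 0" using lam_nn by simp
        then show "dotp de (kern l c) (emb (t,C)) \<ge> N" unfolding V using A by (simp add: algebra_simps)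
      next
        assume A: "\<not> (c \<in> C \<and> win l t)"
        show "dotp de (kern l c) (emb (t,C)) \<le> - N"
        proof (cases "c \<in> C")
          case True
          then have "\<not> win l t" using A by simp
          then have "min (int R) (TA - t) \<ge> int wl + 1" unfolding win_def Some using wlR by auto
          then have "real_of_int (int wl + 1) \<le> tt" unfolding tt_def by (simp only: of_int_le_iff)
          then have "tt \<ge> real (wl + 1)" by simp
          then have "tt / real R \<ge> real (wl+1) / real R" using Rpos by (simp add: divide_right_mono)
          then have "cos (tt / real R) \<le> qq l" unfolding qq_def Some
            using cos_monotone_0_pi_le[of "real (wl+1) / real R"] w1 pi1 s01 by simp
          then have "lam l * (cos (tt / real R) - pp l) \<le> lam l * (qq l - pp l)"
            using lam_nn by (intro mult_left_mono) auto
          then show ?thesis unfolding V using True lampq by (simp add: algebra_simps)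
        next
          case False
          have "lam l * (cos (tt / real R) - 1) \<le> 0" using lam_nn cos1
            by (intro mult_nonneg_nonpos) auto
          then show ?thesis unfolding V using False by (simp add: algebra_simps)
        qed
      qed
    qed
  qed

  have hist: "\<bar>sard R TA de 1 1 \<omega> \<phi> layers K \<kappa> u x - windowed Cs TA ws W x\<bar> < \<epsilon>"
    if x1: "1 \<le> length x" and xv: "\<forall>(t, C)\<in>set x. t \<le> TA \<and> C \<subseteq> Cs" for x :: "'c history"
  proof -
    define chi where "chi l c = Max ((\<lambda>h. dotp de (kern l c) h) ` set (map emb x))" for l c
    have sard_eq: "sard R TA de 1 1 \<omega> \<phi> layers K \<kappa> u x
        = sigmoid (\<Sum>k<K. u k * sigmoid (Max ((\<lambda>h. dotp de (\<kappa> k) h) ` set (map emb x))))"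
      unfolding sard_def layers_def emb_def Let_def by (simp only: foldl_id)
    have dm: "(l*m+i) div m = l" "(l*m+i) mod m = i" if "i < m" for l i
      using that by auto
    have S'eq: "(\<Sum>k<K. u k * sigmoid (Max ((\<lambda>h. dotp de (\<kappa> k) h) ` set (map emb x))))
        = (\<Sum>l<length ws. \<Sum>c\<in>Cs. W l c * sigmoid (chi l c))"
      unfolding K_def sum_regroup
    proof (rule sum.cong[OF refl])
      fix l
      have "(\<Sum>i<m. u (l * m + i) * sigmoid (Max ((\<lambda>h. dotp de (\<kappa> (l * m + i)) h) ` set (map emb x))))
          = (\<Sum>i\<in>{0..<m}. W l (enum i) * sigmoid (chi l (enum i)))"
        by (rule sum.cong) (auto simp: u_def \<kappa>_def chi_def dm)
      also have "\<dots> = (\<Sum>c\<in>Cs. W l c * sigmoid (chi l c))"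
        by (rule sum.reindex_bij_betw[OF bij])
      finally show "(\<Sum>i<m. u (l * m + i) * sigmoid (Max ((\<lambda>h. dotp de (\<kappa> (l * m + i)) h) ` set (map emb x))))
          = (\<Sum>c\<in>Cs. W l c * sigmoid (chi l c))" .
    qed
    have xne: "x \<noteq> []" using x1 by auto
    have chi_bd: "\<bar>sigmoid (chi l c) - xi TA (ws!l) c x\<bar> \<le> sigmoid (- N)"
      if l: "l < length ws" and c: "c \<in> Cs" for l c
    proof -
      define A where "A = (\<lambda>h. dotp de (kern l c) h) ` set (map emb x)"
      have fA: "finite A" "A \<noteq> {}" unfolding A_def using xne by auto
      show ?thesis
      proof (cases "\<exists>(t,C)\<in>set x. c \<in> C \<and> win l t")
        case True
        then obtain t C where tC: "(t,C) \<in> set x" "c \<in> C" "win l t" by auto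
        have "N \<le> dotp de (kern l c) (emb (t,C))"
          using key[of t C l c] tC xv l c by auto
        also have "\<dots> \<le> Max A" using tC(1) fA unfolding A_def by (intro Max_ge) auto
        finally have "sigmoid N \<le> sigmoid (chi l c)" unfolding chi_def A_def[symmetric]
          by (rule sigmoid_mono)
        moreover have "xi TA (ws!l) c x = 1" using True unfolding xi_def win_def by auto
        ultimately show ?thesis using sigmoid_lt1[of "chi l c"] sigmoid_one_minus[of N] by auto
      next
        case False
        have "\<forall>a\<in>A. a \<le> - N"
        proof
          fix a assume "a \<in> A"
          then obtain t C where tC: "(t,C) \<in> set x" "a = dotp de (kern l c) (emb (t,C))"
            unfolding A_def by auto
          then show "a \<le> - N" using key[of t C l c] xv l c False by auto
        qed
        then have "Max A \<le> - N" using fA by simp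
        then have "sigmoid (chi l c) \<le> sigmoid (- N)" unfolding chi_def A_def[symmetric]
          by (rule sigmoid_mono)
        moreover have "xi TA (ws!l) c x = 0" using False unfolding xi_def win_def by auto
        ultimately show ?thesis using sigmoid_pos[of "chi l c"] by auto
      qed
    qed
    define S where "S = (\<Sum>l<length ws. \<Sum>c\<in>Cs. W l c * xi TA (ws ! l) c x)"
    define S' where "S' = (\<Sum>l<length ws. \<Sum>c\<in>Cs. W l c * sigmoid (chi l c))"
    have "S' - S = (\<Sum>l<length ws. \<Sum>c\<in>Cs. W l c * (sigmoid (chi l c) - xi TA (ws ! l) c x))"
      unfolding S_def S'_def by (simp add: sum_subtractf[symmetric] right_diff_distrib)
    also have "\<bar>\<dots>\<bar> \<le> (\<Sum>l<length ws. \<Sum>c\<in>Cs. \<bar>W l c * (sigmoid (chi l c) - xi TA (ws ! l) c x)\<bar>)"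
      by (rule order_trans[OF sum_abs]) (intro sum_mono sum_abs)
    also have "\<dots> \<le> (\<Sum>l<length ws. \<Sum>c\<in>Cs. \<bar>W l c\<bar> * sigmoid (- N))"
      by (intro sum_mono) (auto simp: abs_mult intro!: mult_left_mono chi_bd)
    also have "\<dots> = Wsum * sigmoid (- N)" unfolding Wsum_def by (simp add: sum_distrib_right)
    also have "\<dots> \<le> Wsum * (1 / (1 + N))"
      using sigmoid_neg_bound[of N] Npos Wsum_nn by (intro mult_left_mono) auto
    also have "\<dots> < \<epsilon>"
    proof -
      have "\<epsilon> * N = Wsum + \<epsilon>" unfolding N_def using assms(5) by (simp add: field_simps)
      then have "Wsum < \<epsilon> * (1 + N)" using assms(5) by (simp add: algebra_simps)
      then show ?thesis using Npos by (simp add: pos_divide_less_eq)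
    qed
    finally have "\<bar>S' - S\<bar> < \<epsilon>" .
    moreover have "\<bar>sigmoid S' - sigmoid S\<bar> \<le> \<bar>S' - S\<bar>" by (rule sigmoid_lip)
    ultimately show ?thesis unfolding sard_eq S'eq windowed_def S_def[symmetric] S'_def[symmetric]
      by linarith
  qed
  have "even de" unfolding de_def by simp
  moreover have "length layers = L" unfolding layers_def by simp
  moreover have "\<forall>lay\<in>set layers. length (fst lay) = H" unfolding layers_def by simp
  ultimately show ?thesis using hist by blast
qed

end
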